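(* Let $0<\alpha<1$, $T>0$, $M\ge 2$ an integer, $\tau=T/M$, $t_j=j\tau$ ($j=0,1,\dots,M$), and let $u\in\mathcal{C}^3[0,T]$. Then for every $j=1,2,\dots,M-1$, $$\left|\partial_{0t_{j+1}}^{\alpha}u-\Delta_{0t_{j+1}}^{\alpha}u\right|=\mathcal{O}(\tau^{3-\alpha}),$$ i.e. $\left|\partial_{0t_{j+1}}^{\alpha}u-\Delta_{0t_{j+1}}^{\alpha}u\right|\le C\tau^{3-\alpha}$ with a constant $C$ depending only on $\alpha$ and $\max_{[0,T]}|u'''|$ (not on $\tau$ or $j$).
   Context: The Caputo derivative of order $\alpha\in(0,1)$ is $\partial_{0t}^{\alpha}u=\frac{1}{\Gamma(1-\alpha)}\int_0^t u'(\eta)(t-\eta)^{-\alpha}\,d\eta$. Set $u_{t,s}=(u(t_{s+1})-u(t_s))/\tau$, $a_l^{(\alpha)}=(l+1)^{1-\alpha}-l^{1-\alpha}$ and $b_l^{(\alpha)}=\frac{1}{2-\alpha}\left[(l+1)^{2-\alpha}-l^{2-\alpha}\right]-\frac12\left[(l+1)^{1-\alpha}+l^{1-\alpha}\right]$ for $l\ge0$. The L2 formula is $$\Delta_{0t_{j+1}}^{\alpha}u=\frac{\tau^{1-\alpha}}{\Gamma(2-\alpha)}\sum_{s=0}^{j}c_{j-s}^{(\alpha)}u_{t,s},$$ where the coefficients $c_s^{(\alpha)}$ (which depend on $j$) are: for $j=1$: $c_0^{(\alpha)}=a_0^{(\alpha)}+b_0^{(\alpha)}+b_1^{(\alpha)}$,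 $c_1^{(\alpha)}=a_1^{(\alpha)}-b_1^{(\alpha)}-b_0^{(\alpha)}$; for $j=2$: $c_0^{(\alpha)}=a_0^{(\alpha)}+b_0^{(\alpha)}$, $c_1^{(\alpha)}=a_1^{(\alpha)}+b_1^{(\alpha)}+b_2^{(\alpha)}-b_0^{(\alpha)}$, $c_2^{(\alpha)}=a_2^{(\alpha)}-b_2^{(\alpha)}-b_1^{(\alpha)}$; for $j\ge3$: $c_0^{(\alpha)}=a_0^{(\alpha)}+b_0^{(\alpha)}$, $c_s^{(\alpha)}=a_s^{(\alpha)}+b_s^{(\alpha)}-b_{s-1}^{(\alpha)}$ for $1\le s\le j-2$, $c_{j-1}^{(\alpha)}=a_{j-1}^{(\alpha)}+b_{j-1}^{(\alpha)}+b_j^{(\alpha)}-b_{j-2}^{(\alpha)}$, $c_j^{(\alpha)}=a_j^{(\alpha)}-b_j^{(\alpha)}-b_{j-1}^{(\alpha)}$. *)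

theory Defs
  imports "HOL-Analysis.Analysis"
begin

text \<open>Caputo derivative of order alpha at t (u' taken as the derivative of u
  relative to the interval [0,t], i.e. one-sided at the endpoints).\<close>
definition caputo :: "real \<Rightarrow> (real \<Rightarrow> real) \<Rightarrow> real \<Rightarrow> real" where
  "caputo \<alpha> u t = 1 / Gamma (1 - \<alpha>) *
     integral {0..t} (\<lambda>\<eta>. vector_derivative u (at \<eta> within {0..t}) * (t - \<eta>) powr (- \<alpha>))"

definition L2_a :: "real \<Rightarrow> nat \<Rightarrow> real" where
  "L2_a \<alpha> l = (real l + 1) powr (1 - \<alpha>) - real l powr (1 - \<alpha>)"

definition L2_b :: "real \<Rightarrow> nat \<Rightarrow> real" where
  "L2_b \<alpha> l = 1 / (2 - \<alpha>) * ((real l + 1) powr (2 - \<alpha>) - real l powr (2 - \<alpha>))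
              - 1 / 2 * ((real l + 1) powr (1 - \<alpha>) + real l powr (1 - \<alpha>))"

definition L2_c :: "real \<Rightarrow> nat \<Rightarrow> nat \<Rightarrow> real" where
  "L2_c \<alpha> j s =
    (if j = 1 then
       (if s = 0 then L2_a \<alpha> 0 + L2_b \<alpha> 0 + L2_b \<alpha> 1
        else L2_a \<alpha> 1 - L2_b \<alpha> 1 - L2_b \<alpha> 0)
     else if j = 2 then
       (if s = 0 then L2_a \<alpha> 0 + L2_b \<alpha> 0
        else if s = 1 then L2_a \<alpha> 1 + L2_b \<alpha> 1 + L2_b \<alpha> 2 - L2_b \<alpha> 0
        else L2_a \<alpha> 2 - L2_b \<alpha> 2 - L2_b \<alpha> 1)
     else
       (if s = 0 then L2_a \<alpha> 0 + L2_b \<alpha> 0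
        else if s \<le> j - 2 then L2_a \<alpha> s + L2_b \<alpha> s - L2_b \<alpha> (s - 1)
        else if s = j - 1 then L2_a \<alpha> (j - 1) + L2_b \<alpha> (j - 1) + L2_b \<alpha> j - L2_b \<alpha> (j - 2)
        else L2_a \<alpha> j - L2_b \<alpha> j - L2_b \<alpha> (j - 1)))"

definition L2_formula :: "real \<Rightarrow> real \<Rightarrow> (real \<Rightarrow> real) \<Rightarrow> nat \<Rightarrow> real" where
  "L2_formula \<alpha> \<tau> u j = \<tau> powr (1 - \<alpha>) / Gamma (2 - \<alpha>) *
     (\<Sum>s = 0..j. L2_c \<alpha> j (j - s) * ((u (real (s + 1) * \<tau>) - u (real s * \<tau>)) / \<tau>))"

end

theory Submission
  imports Defs
begin



lemma mvt_bound:
  fixes g g' :: "real \<Rightarrow> real"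
  assumes der: "\<And>y. y \<in> {0..T} \<Longrightarrow> (g has_real_derivative g' y) (at y within {0..T})"
    and x: "x \<in> {0..T}" and z: "z \<in> {0..T}" and g0: "g x = 0"
    and bd: "\<And>y. y \<in> {0..T} \<Longrightarrow> \<bar>y - x\<bar> \<le> \<bar>z - x\<bar> \<Longrightarrow> \<bar>g' y\<bar> \<le> B"
  shows "\<bar>g z\<bar> \<le> B * \<bar>z - x\<bar>"
proof (cases "x \<le> z")
  case True
  have "\<exists>y\<in>{x..z}. g z - g x = (\<lambda>y h. g' y * h) y (z - x)"
  proof (rule mvt_very_simple[OF True])
    fix y assume "x \<le> y" "y \<le> z"
    hence "y \<in> {0..T}" "{x..z} \<subseteq> {0..T}" using x z by auto
    thus "(g has_derivative (\<lambda>y h. g' y * h) y) (at y within {x..z})"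
      using has_field_derivative_subset[OF der] unfolding has_field_derivative_def
      by blast
  qed
  then obtain y where y: "y \<in> {x..z}" "g z = g' y * (z - x)" using g0 by force
  have "y \<in> {0..T}" "\<bar>y - x\<bar> \<le> \<bar>z - x\<bar>" using y x z by auto
  hence "\<bar>g' y\<bar> \<le> B" by (rule bd)
  thus ?thesis using y True by (simp add: abs_mult mult_right_mono mult.commute)
next
  case False
  have "\<exists>y\<in>{z..x}. g x - g z = (\<lambda>y h. g' y * h) y (x - z)"
  proof (rule mvt_very_simple)
    show "z \<le> x" using False by simp
    fix y assume "z \<le> y" "y \<le> x"
    hence "y \<in> {0..T}" "{z..x} \<subseteq> {0..T}" using x z by auto
    thus "(g has_derivative (\<lambda>y h. g' y * h) y) (at y within {z..x})"
      using has_field_derivative_subset[OF der] unfolding has_field_derivative_def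
      by blast
  qed
  then obtain y where y: "y \<in> {z..x}" "g z = - (g' y * (x - z))" using g0 by force
  have "y \<in> {0..T}" "\<bar>y - x\<bar> \<le> \<bar>z - x\<bar>" using y x z by auto
  hence "\<bar>g' y\<bar> \<le> B" by (rule bd)
  thus ?thesis using y False by (simp add: abs_mult mult_right_mono mult.commute)
qed



lemma dpow:
  assumes "0 < t - e"
  shows "((\<lambda>y. (t - y) powr c) has_real_derivative (- (c * (t - e) powr (c - 1)))) (at e within S)"
proof -
  have "((\<lambda>y. t - y) has_real_derivative -1) (at e)" by (auto intro!: derivative_eq_intros)
  from DERIV_fun_powr[OF this assms, of c] show ?thesis
    by (auto intro: has_field_derivative_at_within)
qed

lemma cont_pow:
  fixes t p :: real and S :: "real set"
  assumes "0 < p" "\<And>e. e \<in> S \<Longrightarrow> e \<le> t"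
  shows "continuous_on S (\<lambda>e. (t - e) powr p)"
  by (rule continuous_on_powr'[where f="\<lambda>e. t - e" and g="\<lambda>e. p", simplified]) (use assms in \<open>auto intro!: continuous_intros\<close>)

lemma alg_piece:
  fixes q A B X0 X1 P \<tau> L :: real
  assumes q: "q \<noteq> 0" "q + 1 \<noteq> 0"
  shows "(- (A + B * (L + 1 / 2) * \<tau>) / q) * (X0 * P) + (B / (q + 1)) * (L * X0 * (\<tau> * P))
       - ((- (A + B * (L + 1 / 2) * \<tau>) / q) * (X1 * P) + (B / (q + 1)) * ((L + 1) * X1 * (\<tau> * P)))
     = P / q * ((X1 - X0) * A + (1 / (q + 1) * ((L + 1) * X1 - L * X0) - 1 / 2 * (X1 + X0)) * \<tau> * B)"
proof -
  define r where "r = q + 1"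
  have r: "r \<noteq> 0" using q by (simp add: r_def)
  have "(- (A + B * (L + 1 / 2) * \<tau>) / q) * (X0 * P) + (B / r) * (L * X0 * (\<tau> * P))
       - ((- (A + B * (L + 1 / 2) * \<tau>) / q) * (X1 * P) + (B / r) * ((L + 1) * X1 * (\<tau> * P)))
     = P / q * ((X1 - X0) * A + (1 / r * ((L + 1) * X1 - L * X0) - 1 / 2 * (X1 + X0)) * \<tau> * B)"
    using q(1) r by (simp add: field_simps) (simp add: r_def algebra_simps)
  thus ?thesis by (simp add: r_def)
qed

lemma piece_integral:
  fixes \<alpha> \<tau> t A B :: real and l :: nat
  assumes a0: "0 < \<alpha>" and a1: "\<alpha> < 1" and tau: "0 < \<tau>"
  shows "((\<lambda>e. (A + B * (e - (t - (real l + 1) * \<tau>) - \<tau> / 2)) * (t - e) powr (- \<alpha>)) has_integral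
          (\<tau> powr (1 - \<alpha>) / (1 - \<alpha>) * (L2_a \<alpha> l * A + L2_b \<alpha> l * \<tau> * B)))
         {t - (real l + 1) * \<tau> .. t - real l * \<tau>}"
proof -
  define c where "c = A + B * (real l + 1 / 2) * \<tau>"
  define F where "F e = (- c / (1 - \<alpha>)) * (t - e) powr (1 - \<alpha>) + (B / (2 - \<alpha>)) * (t - e) powr (2 - \<alpha>)" for e
  have "((\<lambda>e. (A + B * (e - (t - (real l + 1) * \<tau>) - \<tau> / 2)) * (t - e) powr (- \<alpha>)) has_integral
          (F (t - real l * \<tau>) - F (t - (real l + 1) * \<tau>))) {t - (real l + 1) * \<tau> .. t - real l * \<tau>}"
  proof (rule fundamental_theorem_of_calculus_interior)
    show "t - (real l + 1) * \<tau> \<le> t - real l * \<tau>" using tau by (simp add: algebra_simps)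
    show "continuous_on {t - (real l + 1) * \<tau>..t - real l * \<tau>} F"
    proof -
      have le: "e \<le> t" if "e \<in> {t - (real l + 1) * \<tau>..t - real l * \<tau>}" for e
        using that tau by (auto intro: order_trans[of _ "t - real l * \<tau>"])
      show ?thesis unfolding F_def
        by (rule continuous_on_add continuous_on_mult_left cont_pow le | use a1 in simp)+
    qed
    fix e assume e: "e \<in> {t - (real l + 1) * \<tau><..<t - real l * \<tau>}"
    have "0 \<le> real l * \<tau>" using tau by simp
    hence pos: "0 < t - e" using e by auto
    have "(F has_real_derivative (c * (t - e) powr (- \<alpha>) - B * (t - e) powr (1 - \<alpha>))) (at e)"
    proof -
      have "(F has_real_derivative ((- c / (1 - \<alpha>)) * (- ((1 - \<alpha>) * (t - e) powr ((1 - \<alpha>) - 1)))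
              + (B / (2 - \<alpha>)) * (- ((2 - \<alpha>) * (t - e) powr ((2 - \<alpha>) - 1))))) (at e)"
        unfolding F_def[abs_def]
        by (intro DERIV_add DERIV_cmult dpow pos)
      moreover have "(- c / (1 - \<alpha>)) * (- ((1 - \<alpha>) * (t - e) powr ((1 - \<alpha>) - 1)))
              + (B / (2 - \<alpha>)) * (- ((2 - \<alpha>) * (t - e) powr ((2 - \<alpha>) - 1)))
            = c * (t - e) powr (- \<alpha>) - B * (t - e) powr (1 - \<alpha>)"
      proof -
        have n: "1 - \<alpha> \<noteq> 0" "2 - \<alpha> \<noteq> 0" using a1 by auto
        have "(- c / (1 - \<alpha>)) * (- ((1 - \<alpha>) * (t - e) powr ((1 - \<alpha>) - 1))) = c * (t - e) powr (- \<alpha>)"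
          using n(1) by simp
        moreover have "(B / (2 - \<alpha>)) * (- ((2 - \<alpha>) * (t - e) powr ((2 - \<alpha>) - 1))) = - (B * (t - e) powr (1 - \<alpha>))"
          using n(2) by (simp add: diff_diff_eq[symmetric] del: diff_diff_eq)
        ultimately show ?thesis by simp
      qed
      ultimately show ?thesis by simp
    qed
    moreover have "c * (t - e) powr (- \<alpha>) - B * (t - e) powr (1 - \<alpha>)
       = (A + B * (e - (t - (real l + 1) * \<tau>) - \<tau> / 2)) * (t - e) powr (- \<alpha>)"
    proof -
      have X: "(t - e) powr (1 - \<alpha>) = (t - e) * (t - e) powr (- \<alpha>)"
        using powr_add[of "t - e" 1 "- \<alpha>"] pos by simp
      show ?thesis unfolding X c_def by (simp add: algebra_simps)
    qed
    ultimately show "(F has_vector_derivative (A + B * (e - (t - (real l + 1) * \<tau>) - \<tau> / 2)) * (t - e) powr (- \<alpha>)) (at e)"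
      by (simp add: has_real_derivative_iff_has_vector_derivative)
  qed
  moreover have "F (t - real l * \<tau>) - F (t - (real l + 1) * \<tau>) = \<tau> powr (1 - \<alpha>) / (1 - \<alpha>) * (L2_a \<alpha> l * A + L2_b \<alpha> l * \<tau> * B)"
  proof -
    have e1: "(real l * \<tau>) powr p = real l powr p * \<tau> powr p" for p using tau by (simp add: powr_mult)
    have e2: "((real l + 1) * \<tau>) powr p = (real l + 1) powr p * \<tau> powr p" for p using tau by (simp add: powr_mult)
    have e3: "\<tau> powr (2 - \<alpha>) = \<tau> * \<tau> powr (1 - \<alpha>)" using powr_add[of \<tau> 1 "1 - \<alpha>"] tau by simp
    have e4: "(real l + 1) powr (2 - \<alpha>) = (real l + 1) * (real l + 1) powr (1 - \<alpha>)"
      using powr_add[of "real l + 1" 1 "1 - \<alpha>"] by simp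
    have e5: "real l powr (2 - \<alpha>) = real l * real l powr (1 - \<alpha>)"
      using powr_add[of "real l" 1 "1 - \<alpha>"] by (cases "l = 0") simp_all
    have a2: "2 - \<alpha> \<noteq> 0" "1 - \<alpha> \<noteq> 0" using a1 by auto
    have t1: "t - (t - real l * \<tau>) = real l * \<tau>" "t - (t - (real l + 1) * \<tau>) = (real l + 1) * \<tau>" by simp_all
    define X0 where "X0 = real l powr (1 - \<alpha>)"
    define X1 where "X1 = (real l + 1) powr (1 - \<alpha>)"
    define P where "P = \<tau> powr (1 - \<alpha>)"
    have "F (t - real l * \<tau>) - F (t - (real l + 1) * \<tau>) =
       (- c / (1 - \<alpha>)) * (X0 * P) + (B / (2 - \<alpha>)) * (real l * X0 * (\<tau> * P))
       - ((- c / (1 - \<alpha>)) * (X1 * P) + (B / (2 - \<alpha>)) * ((real l + 1) * X1 * (\<tau> * P)))"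
      unfolding F_def t1 e1 e2 e3 e4 e5 X0_def X1_def P_def by simp
    also have "\<dots> = P / (1 - \<alpha>) * ((X1 - X0) * A + (1 / (2 - \<alpha>) * ((real l + 1) * X1 - real l * X0) - 1 / 2 * (X1 + X0)) * \<tau> * B)"
      unfolding c_def using alg_piece[of "1 - \<alpha>" A B "real l" \<tau> X0 P X1] a2
      by (simp add: add.commute diff_add_eq)
    also have "\<dots> = \<tau> powr (1 - \<alpha>) / (1 - \<alpha>) * (L2_a \<alpha> l * A + L2_b \<alpha> l * \<tau> * B)"
      unfolding L2_a_def L2_b_def X0_def X1_def P_def e4 e5 by simp
    finally show ?thesis .
  qed
  ultimately show ?thesis by simp
qed



lemma L2_c_alt:
  assumes "1 \<le> j" "s \<le> j"
  shows "L2_c \<alpha> j s = L2_a \<alpha> s + (if s < j then L2_b \<alpha> s else 0)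
     - (if 1 \<le> s then L2_b \<alpha> (s - 1) else 0) + (if s + 1 = j then L2_b \<alpha> j else 0)
     - (if s = j then L2_b \<alpha> j else 0)"
  using assms unfolding L2_c_def
  by (auto simp: numeral_2_eq_2 le_Suc_eq)

lemma L2_sum:
  fixes v :: "nat \<Rightarrow> real"
  assumes j: "1 \<le> j"
  shows "(\<Sum>k = 0..j. L2_c \<alpha> j (j - k) * v k)
       = (\<Sum>k = 0..j. L2_a \<alpha> (j - k) * v k + L2_b \<alpha> (j - k) * (v (max k 1) - v (max k 1 - 1)))"
proof -
  define a where "a = L2_a \<alpha>"
  define b where "b = L2_b \<alpha>"
  obtain n where n: "j = Suc n" using j by (cases j) auto
  define D where "D k = (if 1 \<le> k then b (j - k) * v k else 0) - (if k < j then b (j - k - 1) * v k else 0)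
      + (if k = 1 then b j * v k else 0) - (if k = 0 then b j * v k else 0)" for k
  define E where "E k = b (j - k) * (v (max k 1) - v (max k 1 - 1))" for k
  have L: "(\<Sum>k = 0..j. L2_c \<alpha> j (j - k) * v k) = (\<Sum>k = 0..j. a (j - k) * v k + D k)"
  proof (rule sum.cong[OF refl])
    fix k assume k: "k \<in> {0..j}"
    show "L2_c \<alpha> j (j - k) * v k = a (j - k) * v k + D k"
      using k j unfolding L2_c_alt[OF j diff_le_self] D_def a_def b_def
      by (auto simp: algebra_simps)
  qed
  have R: "(\<Sum>k = 0..j. L2_a \<alpha> (j - k) * v k + L2_b \<alpha> (j - k) * (v (max k 1) - v (max k 1 - 1)))
     = (\<Sum>k = 0..j. a (j - k) * v k + E k)"
    unfolding a_def b_def E_def ..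
  have sE: "(\<Sum>k = 0..j. E k) = b j * (v 1 - v 0) + (\<Sum>i = 0..n. b (j - Suc i) * (v (Suc i) - v i))"
  proof -
    have "(\<Sum>k = 0..j. E k) = E 0 + (\<Sum>k = Suc 0..Suc n. E k)"
      unfolding n by (rule sum.atLeast_Suc_atMost) simp
    also have "(\<Sum>k = Suc 0..Suc n. E k) = (\<Sum>i = 0..n. E (Suc i))"
      by (rule sum.shift_bounds_cl_Suc_ivl)
    finally show ?thesis unfolding E_def by simp
  qed
  have s1: "(\<Sum>k = 0..j. (if 1 \<le> k then b (j - k) * v k else 0)) = (\<Sum>i = 0..n. b (j - Suc i) * v (Suc i))"
  proof -
    have "(\<Sum>k = 0..j. (if 1 \<le> k then b (j - k) * v k else 0))
        = (if 1 \<le> (0::nat) then b (j - 0) * v 0 else 0) + (\<Sum>k = Suc 0..Suc n. (if 1 \<le> k then b (j - k) * v k else 0))"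
      unfolding n by (rule sum.atLeast_Suc_atMost) simp
    also have "(\<Sum>k = Suc 0..Suc n. (if 1 \<le> k then b (j - k) * v k else 0)) = (\<Sum>i = 0..n. (if 1 \<le> Suc i then b (j - Suc i) * v (Suc i) else 0))"
      by (rule sum.shift_bounds_cl_Suc_ivl)
    finally show ?thesis by simp
  qed
  have s2: "(\<Sum>k = 0..j. (if k < j then b (j - k - 1) * v k else 0)) = (\<Sum>i = 0..n. b (j - Suc i) * v i)"
    unfolding n by (simp add: sum.atLeast0_atMost_Suc)
  have s3: "(\<Sum>k = 0..j. (if k = 1 then b j * v k else 0)) = b j * v 1"
    using j by (simp add: sum.delta)
  have s4: "(\<Sum>k = 0..j. (if k = 0 then b j * v k else 0)) = b j * v 0"
    by (simp add: sum.delta)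
  have sD: "(\<Sum>k = 0..j. D k) = (\<Sum>i = 0..n. b (j - Suc i) * v (Suc i)) - (\<Sum>i = 0..n. b (j - Suc i) * v i) + b j * v 1 - b j * v 0"
    unfolding D_def sum.distrib sum_subtractf s1 s2 s3 s4 ..
  have "(\<Sum>k = 0..j. D k) = (\<Sum>k = 0..j. E k)"
    unfolding sD sE by (simp add: sum_subtractf algebra_simps)
  thus ?thesis unfolding L sum.distrib by (simp add: a_def b_def E_def)
qed



lemma int_prod_w:
  fixes g w :: "real \<Rightarrow> real"
  assumes g: "continuous_on {a..b} g" and w: "w integrable_on {a..b}" and w0: "\<And>e. e \<in> {a..b} \<Longrightarrow> 0 \<le> w e"
  shows "(\<lambda>e. g e * w e) integrable_on {a..b}"
proof -
  have "(\<lambda>e. g e * w e) absolutely_integrable_on {a..b}"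
  proof (rule absolutely_integrable_bounded_measurable_product_real)
    show "g \<in> borel_measurable (lebesgue_on {a..b})"
      by (rule continuous_imp_measurable_on_sets_lebesgue[OF g]) simp
    show "{a..b} \<in> sets lebesgue" by simp
    show "bounded (g ` {a..b})"
      by (rule compact_imp_bounded[OF compact_continuous_image[OF g compact_Icc]])
    show "w absolutely_integrable_on {a..b}"
      by (rule nonnegative_absolutely_integrable_1[OF w w0])
  qed
  thus ?thesis using set_lebesgue_integral_eq_integral(1) by blast
qed

context
  fixes u u1 u2 u3 :: "real \<Rightarrow> real" and T K :: real
  assumes d0: "\<And>x. x \<in> {0..T} \<Longrightarrow> (u has_real_derivative u1 x) (at x within {0..T})"
    and d1: "\<And>x. x \<in> {0..T} \<Longrightarrow> (u1 has_real_derivative u2 x) (at x within {0..T})"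
    and d2: "\<And>x. x \<in> {0..T} \<Longrightarrow> (u2 has_real_derivative u3 x) (at x within {0..T})"
    and bK: "\<And>x. x \<in> {0..T} \<Longrightarrow> \<bar>u3 x\<bar> \<le> K"
begin

lemma K_nonneg: "0 \<le> T \<Longrightarrow> 0 \<le> K"
  using bK[of 0] by auto

lemma tay2:
  assumes x: "x \<in> {0..T}" and z: "z \<in> {0..T}"
  shows "\<bar>u2 z - u2 x\<bar> \<le> K * \<bar>z - x\<bar>"
proof -
  have "\<bar>(\<lambda>y. u2 y - u2 x) z\<bar> \<le> K * \<bar>z - x\<bar>"
  proof (rule mvt_bound[where g' = u3 and T = T])
    show "((\<lambda>y. u2 y - u2 x) has_real_derivative u3 y) (at y within {0..T})" if "y \<in> {0..T}" for y
      using d2[OF that] by (auto intro!: derivative_eq_intros)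
  qed (use x z bK in auto)
  thus ?thesis by simp
qed

lemma tay1:
  assumes x: "x \<in> {0..T}" and z: "z \<in> {0..T}"
  shows "\<bar>u1 z - u1 x - u2 x * (z - x)\<bar> \<le> K * \<bar>z - x\<bar>^2"
proof -
  have K0: "0 \<le> K" using K_nonneg x by auto
  have "\<bar>(\<lambda>y. u1 y - u1 x - u2 x * (y - x)) z\<bar> \<le> (K * \<bar>z - x\<bar>) * \<bar>z - x\<bar>"
  proof (rule mvt_bound[where g' = "\<lambda>y. u2 y - u2 x" and T = T])
    show "((\<lambda>y. u1 y - u1 x - u2 x * (y - x)) has_real_derivative u2 y - u2 x) (at y within {0..T})" if "y \<in> {0..T}" for y
      using d1[OF that] by (auto intro!: derivative_eq_intros)
    show "\<bar>u2 y - u2 x\<bar> \<le> K * \<bar>z - x\<bar>" if "y \<in> {0..T}" "\<bar>y - x\<bar> \<le> \<bar>z - x\<bar>" for y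
      using tay2[OF x that(1)] that(2) K0 by (meson mult_left_mono order_trans)
  qed (use x z in auto)
  thus ?thesis by (simp add: power2_eq_square mult.assoc)
qed

lemma tay0:
  assumes x: "x \<in> {0..T}" and z: "z \<in> {0..T}"
  shows "\<bar>u z - u x - u1 x * (z - x) - u2 x * (z - x)^2 / 2\<bar> \<le> K * \<bar>z - x\<bar>^3"
proof -
  have K0: "0 \<le> K" using K_nonneg x by auto
  have "\<bar>(\<lambda>y. u y - u x - u1 x * (y - x) - u2 x * (y - x)^2 / 2) z\<bar> \<le> (K * \<bar>z - x\<bar>^2) * \<bar>z - x\<bar>"
  proof (rule mvt_bound[where g' = "\<lambda>y. u1 y - u1 x - u2 x * (y - x)" and T = T])
    show "((\<lambda>y. u y - u x - u1 x * (y - x) - u2 x * (y - x)^2 / 2) has_real_derivative u1 y - u1 x - u2 x * (y - x)) (at y within {0..T})" if "y \<in> {0..T}" for y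
      using d0[OF that] by (auto intro!: derivative_eq_intros simp: power2_eq_square field_simps)
    show "\<bar>u1 y - u1 x - u2 x * (y - x)\<bar> \<le> K * \<bar>z - x\<bar>^2" if "y \<in> {0..T}" "\<bar>y - x\<bar> \<le> \<bar>z - x\<bar>" for y
    proof -
      have "\<bar>y - x\<bar>^2 \<le> \<bar>z - x\<bar>^2" using power_mono[OF that(2), of 2] by simp
      thus ?thesis using tay1[OF x that(1)] K0 by (meson mult_left_mono order_trans)
    qed
  qed (use x z in auto)
  thus ?thesis by (simp add: power3_eq_cube power2_eq_square mult.assoc)
qed

lemma interp:
  assumes h: "0 < h" and xl: "0 \<le> x - h" and xr: "x + h \<le> T" and e: "e \<in> {x - h..x + h}"
  shows "\<bar>u e - (u x + (u (x + h) - u (x - h)) / (2 * h) * (e - x)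
            + (u (x + h) - 2 * u x + u (x - h)) / (2 * h^2) * (e - x)^2)\<bar> \<le> 3 * K * h^3"
    and "\<bar>u1 e - ((u (x + h) - u (x - h)) / (2 * h)
            + (u (x + h) - 2 * u x + u (x - h)) / h^2 * (e - x))\<bar> \<le> 4 * K * h^2"
proof -
  define R where "R z = u z - u x - u1 x * (z - x) - u2 x * (z - x)^2 / 2" for z
  define R1 where "R1 z = u1 z - u1 x - u2 x * (z - x)" for z
  define d where "d = e - x"
  have K0: "0 \<le> K" using K_nonneg xl xr h by auto
  have xT: "x \<in> {0..T}" "x + h \<in> {0..T}" "x - h \<in> {0..T}" "e \<in> {0..T}" using xl xr h e by auto
  have dh: "\<bar>d\<bar> \<le> h" using e by (auto simp: d_def)
  have Rp: "\<bar>R (x + h)\<bar> \<le> K * h^3" using tay0[OF xT(1) xT(2)] h unfolding R_def by simp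
  have Rm: "\<bar>R (x - h)\<bar> \<le> K * h^3" using tay0[OF xT(1) xT(3)] h unfolding R_def by simp
  have Re: "\<bar>R e\<bar> \<le> K * h^3"
  proof -
    have "\<bar>R e\<bar> \<le> K * \<bar>d\<bar>^3" using tay0[OF xT(1) xT(4)] unfolding R_def d_def by simp
    also have "\<dots> \<le> K * h^3" using mult_left_mono[OF power_mono[OF dh abs_ge_zero] K0] by simp
    finally show ?thesis .
  qed
  have R1e: "\<bar>R1 e\<bar> \<le> K * h^2"
  proof -
    have "\<bar>R1 e\<bar> \<le> K * \<bar>d\<bar>^2" using tay1[OF xT(1) xT(4)] unfolding R1_def d_def by simp
    also have "\<dots> \<le> K * h^2" using mult_left_mono[OF power_mono[OF dh abs_ge_zero] K0] by (metis power2_abs)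
    finally show ?thesis .
  qed
  have s1: "\<bar>R (x + h) - R (x - h)\<bar> \<le> 2 * K * h^3" using Rp Rm by linarith
  have s2: "\<bar>R (x + h) + R (x - h)\<bar> \<le> 2 * K * h^3" using Rp Rm by linarith
  have id0: "u e - (u x + (u (x + h) - u (x - h)) / (2 * h) * (e - x)
            + (u (x + h) - 2 * u x + u (x - h)) / (2 * h^2) * (e - x)^2)
     = R e - (R (x + h) - R (x - h)) * d / (2 * h) - (R (x + h) + R (x - h)) * d^2 / (2 * h^2)"
    using h unfolding R_def d_def by (simp add: field_simps power2_eq_square)
  have id1: "u1 e - ((u (x + h) - u (x - h)) / (2 * h)
            + (u (x + h) - 2 * u x + u (x - h)) / h^2 * (e - x))
     = R1 e - (R (x + h) - R (x - h)) / (2 * h) - (R (x + h) + R (x - h)) * d / h^2"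
    using h unfolding R_def R1_def d_def by (simp add: field_simps power2_eq_square)
  have b1: "\<bar>(R (x + h) - R (x - h)) * d / (2 * h)\<bar> \<le> K * h^3"
  proof -
    have "\<bar>(R (x + h) - R (x - h)) * d\<bar> \<le> (2 * K * h^3) * h"
      unfolding abs_mult by (rule mult_mono[OF s1 dh]) (use K0 h in auto)
    thus ?thesis using h by (simp add: abs_divide field_simps power3_eq_cube power2_eq_square)
  qed
  have b2: "\<bar>(R (x + h) + R (x - h)) * d^2 / (2 * h^2)\<bar> \<le> K * h^3"
  proof -
    have d2: "\<bar>d^2\<bar> \<le> h^2" using power_mono[OF dh, of 2] by simp
    have "\<bar>(R (x + h) + R (x - h)) * d^2\<bar> \<le> (2 * K * h^3) * h^2"
      unfolding abs_mult by (rule mult_mono[OF s2 d2]) (use K0 h in auto)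
    thus ?thesis using h by (simp add: abs_divide field_simps power3_eq_cube power2_eq_square)
  qed
  have b3: "\<bar>(R (x + h) - R (x - h)) / (2 * h)\<bar> \<le> K * h^2"
    using s1 h by (simp add: abs_divide field_simps power3_eq_cube power2_eq_square)
  have b4: "\<bar>(R (x + h) + R (x - h)) * d / h^2\<bar> \<le> 2 * K * h^2"
  proof -
    have "\<bar>(R (x + h) + R (x - h)) * d\<bar> \<le> (2 * K * h^3) * h"
      unfolding abs_mult by (rule mult_mono[OF s2 dh]) (use K0 h in auto)
    thus ?thesis using h by (simp add: abs_divide field_simps power3_eq_cube power2_eq_square)
  qed
  show "\<bar>u e - (u x + (u (x + h) - u (x - h)) / (2 * h) * (e - x)
            + (u (x + h) - 2 * u x + u (x - h)) / (2 * h^2) * (e - x)^2)\<bar> \<le> 3 * K * h^3"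
    unfolding id0 using Re b1 b2 by linarith
  show "\<bar>u1 e - ((u (x + h) - u (x - h)) / (2 * h)
            + (u (x + h) - 2 * u x + u (x - h)) / h^2 * (e - x))\<bar> \<le> 4 * K * h^2"
    unfolding id1 using R1e b3 b4 by linarith
qed




end



context
  fixes u u1 u2 u3 :: "real \<Rightarrow> real" and T K :: real
  assumes d0: "\<And>x. x \<in> {0..T} \<Longrightarrow> (u has_real_derivative u1 x) (at x within {0..T})"
    and d1: "\<And>x. x \<in> {0..T} \<Longrightarrow> (u1 has_real_derivative u2 x) (at x within {0..T})"
    and d2: "\<And>x. x \<in> {0..T} \<Longrightarrow> (u2 has_real_derivative u3 x) (at x within {0..T})"
    and bK: "\<And>x. x \<in> {0..T} \<Longrightarrow> \<bar>u3 x\<bar> \<le> K"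
begin

lemma per_interval:
  fixes \<alpha> \<tau> t a x A B :: real and l :: nat
  assumes a0: "0 < \<alpha>" and a1: "\<alpha> < 1" and tau: "0 < \<tau>"
    and xl: "0 \<le> x - \<tau>" and xr: "x + \<tau> \<le> T"
    and ax: "a = x - \<tau> \<or> a = x"
    and ta: "t - a = (real l + 1) * \<tau>"
    and Qeq: "\<And>e. (u (x + \<tau>) - u (x - \<tau>)) / (2 * \<tau>) + (u (x + \<tau>) - 2 * u x + u (x - \<tau>)) / \<tau>^2 * (e - x)
                 = A + B * (e - a - \<tau> / 2)"
  shows "(\<lambda>e. u1 e * (t - e) powr (- \<alpha>)) integrable_on {a..a + \<tau>}"
    and "\<bar>integral {a..a + \<tau>} (\<lambda>e. u1 e * (t - e) powr (- \<alpha>))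
           - \<tau> powr (1 - \<alpha>) / (1 - \<alpha>) * (L2_a \<alpha> l * A + L2_b \<alpha> l * \<tau> * B)\<bar>
         \<le> (if l = 0 then 4 * K * \<tau>^2 * (\<tau> powr (1 - \<alpha>) / (1 - \<alpha>))
            else 3 * K * \<tau>^3 * ((t - (a + \<tau>)) powr (- \<alpha>) - (t - a) powr (- \<alpha>)))"
proof -
  define w where "w e = (t - e) powr (- \<alpha>)" for e
  define c1 where "c1 = (u (x + \<tau>) - u (x - \<tau>)) / (2 * \<tau>)"
  define c3 where "c3 = (u (x + \<tau>) - 2 * u x + u (x - \<tau>)) / \<tau>^2"
  define P where "P e = u x + c1 * (e - x) + (c3 / 2) * (e - x)^2" for e
  define Q where "Q e = c1 + c3 * (e - x)" for e
  define J where "J = \<tau> powr (1 - \<alpha>) / (1 - \<alpha>) * (L2_a \<alpha> l * A + L2_b \<alpha> l * \<tau> * B)"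
  have ends: "t - (real l + 1) * \<tau> = a" "t - real l * \<tau> = a + \<tau>" using ta by (simp_all add: algebra_simps)
  have sub1: "{a..a + \<tau>} \<subseteq> {x - \<tau>..x + \<tau>}" using ax tau by auto
  have sub0: "{a..a + \<tau>} \<subseteq> {0..T}" using sub1 xl xr by auto
  have tle: "e \<le> t" if "e \<in> {a..a + \<tau>}" for e
  proof -
    have "0 \<le> real l * \<tau>" using tau by simp
    moreover have "t = a + \<tau> + real l * \<tau>" using ta by (simp add: algebra_simps)
    moreover have "e \<le> a + \<tau>" using that by simp
    ultimately show ?thesis by linarith
  qed
  have w0: "0 \<le> w e" for e unfolding w_def by simp
  have wint: "(w has_integral (\<tau> powr (1 - \<alpha>) / (1 - \<alpha>) * L2_a \<alpha> l)) {a..a + \<tau>}"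
    using piece_integral[OF a0 a1 tau, of 1 0 t l] unfolding ends w_def by simp
  have u1c: "continuous_on {a..a + \<tau>} u1"
    using DERIV_continuous_on[of "{0..T}" u1 u2] d1 continuous_on_subset[OF _ sub0] by blast
  have hQ: "((\<lambda>e. Q e * w e) has_integral J) {a..a + \<tau>}"
  proof -
    have "Q e = A + B * (e - (t - (real l + 1) * \<tau>) - \<tau> / 2)" for e
      unfolding ends Q_def c1_def c3_def using Qeq[of e] by simp
    thus ?thesis using piece_integral[OF a0 a1 tau, of A B t l] unfolding ends w_def J_def by simp
  qed
  have int1: "(\<lambda>e. u1 e * w e) integrable_on {a..a + \<tau>}"
    using int_prod_w[OF u1c has_integral_integrable[OF wint] w0] .
  thus "(\<lambda>e. u1 e * (t - e) powr (- \<alpha>)) integrable_on {a..a + \<tau>}" unfolding w_def .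
  have diff: "integral {a..a + \<tau>} (\<lambda>e. u1 e * w e) - J = integral {a..a + \<tau>} (\<lambda>e. (u1 e - Q e) * w e)"
    using integral_diff[OF int1 has_integral_integrable[OF hQ]] integral_unique[OF hQ]
    by (simp add: algebra_simps)
  have K0: "0 \<le> K" using bK[of 0] xl xr tau by auto
  have intp: "\<bar>u e - P e\<bar> \<le> 3 * K * \<tau>^3" "\<bar>u1 e - Q e\<bar> \<le> 4 * K * \<tau>^2" if "e \<in> {a..a + \<tau>}" for e
    using interp[OF d0 d1 d2 bK tau xl xr, of e] that sub1
    unfolding P_def Q_def c1_def c3_def by (auto simp: field_simps)
  show "\<bar>integral {a..a + \<tau>} (\<lambda>e. u1 e * (t - e) powr (- \<alpha>)) - J\<bar>
         \<le> (if l = 0 then 4 * K * \<tau>^2 * (\<tau> powr (1 - \<alpha>) / (1 - \<alpha>))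
            else 3 * K * \<tau>^3 * ((t - (a + \<tau>)) powr (- \<alpha>) - (t - a) powr (- \<alpha>)))"
  proof (cases "l = 0")
    case True
    have tl: "t = a + \<tau>" using ta True by simp
    have "norm (integral {a..a + \<tau>} (\<lambda>e. (u1 e - Q e) * w e))
        \<le> integral {a..a + \<tau>} (\<lambda>e. 4 * K * \<tau>^2 * w e)"
    proof (rule integral_norm_bound_integral)
      show "(\<lambda>e. (u1 e - Q e) * w e) integrable_on {a..a + \<tau>}"
        by (rule int_prod_w[OF _ has_integral_integrable[OF wint] w0])
           (auto simp: Q_def intro!: continuous_intros u1c)
      show "(\<lambda>e. 4 * K * \<tau>^2 * w e) integrable_on {a..a + \<tau>}"
        using has_integral_integrable[OF has_integral_mult_right[OF wint]] .
      fix e assume e: "e \<in> {a..a + \<tau>}"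
      show "norm ((u1 e - Q e) * w e) \<le> 4 * K * \<tau>^2 * w e"
        using mult_right_mono[OF intp(2)[OF e] w0[of e]] w0[of e] by (simp add: abs_mult)
    qed
    also have "\<dots> = 4 * K * \<tau>^2 * (\<tau> powr (1 - \<alpha>) / (1 - \<alpha>))"
      using integral_unique[OF has_integral_mult_right[OF wint, of "4 * K * \<tau>^2"]] True
      by (simp add: L2_a_def)
    finally show ?thesis using True diff by (simp add: w_def)
  next
    case False
    hence l1: "1 \<le> real l" by simp
    have tpos: "\<tau> \<le> t - e" if "e \<in> {a..a + \<tau>}" for e
    proof -
      have "\<tau> \<le> real l * \<tau>" using l1 tau by simp
      moreover have "t = a + \<tau> + real l * \<tau>" using ta by (simp add: algebra_simps)
      moreover have "e \<le> a + \<tau>" using that by simp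
      ultimately show ?thesis by linarith
    qed
    define w' where "w' e = \<alpha> * (t - e) powr (- \<alpha> - 1)" for e
    have w'0: "0 \<le> w' e" for e unfolding w'_def using a0 by simp
    have dw: "(w has_real_derivative w' e) (at e within {a..a + \<tau>})" if "e \<in> {a..a + \<tau>}" for e
      using dpow[of t e "- \<alpha>" "{a..a + \<tau>}"] tpos[OF that] tau unfolding w_def w'_def by simp
    have wc: "continuous_on {a..a + \<tau>} w" using DERIV_continuous_on[OF dw] .
    have w'c: "continuous_on {a..a + \<tau>} w'"
      unfolding w'_def
      by (intro continuous_intros) (use tpos tau in \<open>auto dest!: tpos\<close>)
    have uc: "continuous_on {a..a + \<tau>} u"
      using DERIV_continuous_on[of "{0..T}" u u1] d0 continuous_on_subset[OF _ sub0] by blast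
    have hw': "(w' has_integral (w (a + \<tau>) - w a)) {a..a + \<tau>}"
      using fundamental_theorem_of_calculus[of a "a + \<tau>" w w'] dw tau
      by (simp add: has_real_derivative_iff_has_vector_derivative)
    have Pa: "P a = u a" "P (a + \<tau>) = u (a + \<tau>)"
      using ax tau unfolding P_def c1_def c3_def
      by (auto simp: field_simps power2_eq_square)
    have hE: "((\<lambda>e. (u1 e - Q e) * w e + (u e - P e) * w' e) has_integral
               ((u (a + \<tau>) - P (a + \<tau>)) * w (a + \<tau>) - (u a - P a) * w a)) {a..a + \<tau>}"
    proof (rule fundamental_theorem_of_calculus[of a "a + \<tau>" "\<lambda>e. (u e - P e) * w e", simplified has_real_derivative_iff_has_vector_derivative[symmetric]])
      show "a \<le> a + \<tau>" using tau by simp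
      fix e assume e: "e \<in> {a..a + \<tau>}"
      have du: "(u has_real_derivative u1 e) (at e within {a..a + \<tau>})"
        using has_field_derivative_subset[OF d0 sub0] e sub0 by blast
      have dP: "(P has_real_derivative Q e) (at e within {a..a + \<tau>})"
        unfolding P_def[abs_def] Q_def
        by (auto intro!: derivative_eq_intros simp: power2_eq_square algebra_simps)
      show "((\<lambda>e. (u e - P e) * w e) has_real_derivative (u1 e - Q e) * w e + (u e - P e) * w' e) (at e within {a..a + \<tau>})"
        using DERIV_mult[OF DERIV_diff[OF du dP] dw[OF e]] by (simp add: mult.commute)
    qed
    hence hE0: "((\<lambda>e. (u1 e - Q e) * w e + (u e - P e) * w' e) has_integral 0) {a..a + \<tau>}"
      using Pa by simp
    have int2: "(\<lambda>e. (u e - P e) * w' e) integrable_on {a..a + \<tau>}"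
      by (rule integrable_continuous_interval) (auto simp: P_def intro!: continuous_intros uc w'c)
    have int3: "(\<lambda>e. (u1 e - Q e) * w e) integrable_on {a..a + \<tau>}"
      by (rule integrable_continuous_interval) (auto simp: Q_def intro!: continuous_intros u1c wc)
    have eqi: "integral {a..a + \<tau>} (\<lambda>e. (u1 e - Q e) * w e) = - integral {a..a + \<tau>} (\<lambda>e. (u e - P e) * w' e)"
      using integral_add[OF int3 int2] integral_unique[OF hE0] by simp
    have "norm (integral {a..a + \<tau>} (\<lambda>e. (u e - P e) * w' e))
        \<le> integral {a..a + \<tau>} (\<lambda>e. 3 * K * \<tau>^3 * w' e)"
    proof (rule integral_norm_bound_integral[OF int2])
      show "(\<lambda>e. 3 * K * \<tau>^3 * w' e) integrable_on {a..a + \<tau>}"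
        using has_integral_integrable[OF has_integral_mult_right[OF hw']] .
      fix e assume e: "e \<in> {a..a + \<tau>}"
      show "norm ((u e - P e) * w' e) \<le> 3 * K * \<tau>^3 * w' e"
        using mult_right_mono[OF intp(1)[OF e] w'0[of e]] w'0[of e] by (simp add: abs_mult)
    qed
    also have "\<dots> = 3 * K * \<tau>^3 * (w (a + \<tau>) - w a)"
      using integral_unique[OF has_integral_mult_right[OF hw', of "3 * K * \<tau>^3"]] by simp
    finally show ?thesis using False eqi diff by (simp add: w_def)
  qed
qed

lemma main_est:
  fixes \<alpha> \<tau> :: real and j :: nat
  assumes a0: "0 < \<alpha>" and a1: "\<alpha> < 1" and tau: "0 < \<tau>" and j: "1 \<le> j"
    and jT: "real (j + 1) * \<tau> \<le> T"
  shows "\<bar>caputo \<alpha> u (real (j + 1) * \<tau>) - L2_formula \<alpha> \<tau> u j\<bar>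
           \<le> K * (3 + 4 / (1 - \<alpha>)) / Gamma (1 - \<alpha>) * \<tau> powr (3 - \<alpha>)"
proof -
  define t where "t = real (j + 1) * \<tau>"
  define v where "v i = (u (real (i + 1) * \<tau>) - u (real i * \<tau>)) / \<tau>" for i
  define d where "d k = (v (max k 1) - v (max k 1 - 1)) / \<tau>" for k
  define I where "I k = integral {real k * \<tau>..real k * \<tau> + \<tau>} (\<lambda>e. u1 e * (t - e) powr (- \<alpha>))" for k
  define J where "J k = \<tau> powr (1 - \<alpha>) / (1 - \<alpha>) * (L2_a \<alpha> (j - k) * v k + L2_b \<alpha> (j - k) * \<tau> * d k)" for k
  define W where "W k = (t - real k * \<tau>) powr (- \<alpha>)" for k
  define bd where "bd k = (if j - k = 0 then 4 * K * \<tau>^2 * (\<tau> powr (1 - \<alpha>) / (1 - \<alpha>))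
            else 3 * K * \<tau>^3 * ((t - (real k * \<tau> + \<tau>)) powr (- \<alpha>) - (t - real k * \<tau>) powr (- \<alpha>)))" for k
  have T0: "0 \<le> T" using jT tau by (smt (verit) mult_nonneg_nonneg of_nat_0_le_iff)
  have K0: "0 \<le> K" using bK[of 0] T0 by auto
  have piece: "(\<lambda>e. u1 e * (t - e) powr (- \<alpha>)) integrable_on {real k * \<tau>..real k * \<tau> + \<tau>}
       \<and> \<bar>I k - J k\<bar> \<le> bd k" if k: "k \<le> j" for k
  proof -
    define x where "x = real (max k 1) * \<tau>"
    have mx: "max k 1 \<le> j" using k j by simp
    have xl: "0 \<le> x - \<tau>" unfolding x_def using tau by (simp add: algebra_simps)
    have xr: "x + \<tau> \<le> T"
    proof -
      have "x + \<tau> = real (max k 1 + 1) * \<tau>" unfolding x_def by (simp add: algebra_simps)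
      also have "\<dots> \<le> real (j + 1) * \<tau>" using mx tau by (intro mult_right_mono) auto
      finally show ?thesis using jT by simp
    qed
    have ax: "real k * \<tau> = x - \<tau> \<or> real k * \<tau> = x" unfolding x_def by (cases "k = 0") auto
    have ta: "t - real k * \<tau> = (real (j - k) + 1) * \<tau>" unfolding t_def using k by (simp add: algebra_simps of_nat_diff)
    have Qeq: "(u (x + \<tau>) - u (x - \<tau>)) / (2 * \<tau>) + (u (x + \<tau>) - 2 * u x + u (x - \<tau>)) / \<tau>^2 * (e - x)
                 = v k + d k * (e - real k * \<tau> - \<tau> / 2)" for e
    proof (cases "k = 0")
      case True
      have x1: "x = \<tau>" unfolding x_def True by simp
      have v0: "v 0 = (u x - u (x - \<tau>)) / \<tau>" unfolding v_def x1 by simp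
      have v1: "v 1 = (u (x + \<tau>) - u x) / \<tau>" unfolding v_def x1 by simp
      have dk: "d k = (v 1 - v 0) / \<tau>" unfolding d_def True by simp
      show ?thesis unfolding dk unfolding True v0 v1 using tau x1
        by (simp add: field_simps power2_eq_square)
    next
      case False
      have x1: "x = real k * \<tau>" unfolding x_def using False by simp
      have vk: "v k = (u (x + \<tau>) - u x) / \<tau>" unfolding v_def x1 by (simp add: algebra_simps)
      have vk1: "v (k - 1) = (u x - u (x - \<tau>)) / \<tau>" unfolding v_def x1 using False
        by (simp add: algebra_simps of_nat_diff)
      have dk: "d k = (v k - v (k - 1)) / \<tau>" unfolding d_def using False by simp
      show ?thesis unfolding dk vk vk1 x1[symmetric] using tau
        by (simp add: field_simps power2_eq_square)
    qed
    from per_interval[OF a0 a1 tau xl xr ax ta Qeq]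
    show ?thesis unfolding I_def J_def bd_def by blast
  qed
  have G0: "0 < Gamma (1 - \<alpha>)" using a1 by simp
  have hint: "((\<lambda>e. u1 e * (t - e) powr (- \<alpha>)) has_integral (\<Sum>k<n. I k)) {0..real n * \<tau>}"
    if "n \<le> j + 1" for n
    using that
  proof (induction n)
    case 0
    then show ?case using has_integral_refl(2) by simp
  next
    case (Suc n)
    have "((\<lambda>e. u1 e * (t - e) powr (- \<alpha>)) has_integral I n) {real n * \<tau>..real n * \<tau> + \<tau>}"
      using piece[of n] Suc.prems unfolding I_def by (simp add: integrable_integral)
    from has_integral_combine[OF _ _ Suc.IH[OF Suc_leD[OF Suc.prems]] this]
    show ?case using tau by (simp add: algebra_simps)
  qed
  have cap: "caputo \<alpha> u t = (\<Sum>k<Suc j. I k) / Gamma (1 - \<alpha>)"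
  proof -
    have t0: "0 < t" unfolding t_def using tau by simp
    have tT: "t \<le> T" using jT unfolding t_def .
    have "integral {0..t} (\<lambda>e. vector_derivative u (at e within {0..t}) * (t - e) powr (- \<alpha>))
        = integral {0..t} (\<lambda>e. u1 e * (t - e) powr (- \<alpha>))"
    proof (rule integral_cong)
      fix e assume e: "e \<in> {0..t}"
      have "(u has_real_derivative u1 e) (at e within {0..t})"
        using has_field_derivative_subset[OF d0[of e]] e tT by auto
      hence "vector_derivative u (at e within {0..t}) = u1 e"
        using vector_derivative_within_closed_interval[OF t0 e]
        by (simp add: has_real_derivative_iff_has_vector_derivative)
      thus "vector_derivative u (at e within {0..t}) * (t - e) powr (- \<alpha>) = u1 e * (t - e) powr (- \<alpha>)"
        by simp
    qed
    also have "\<dots> = (\<Sum>k<Suc j. I k)"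
      using integral_unique[OF hint[of "Suc j"]] unfolding t_def by simp
    finally show ?thesis unfolding caputo_def by simp
  qed
  have L2: "L2_formula \<alpha> \<tau> u j = (\<Sum>k<Suc j. J k) / Gamma (1 - \<alpha>)"
  proof -
    have g2: "Gamma (2 - \<alpha>) = (1 - \<alpha>) * Gamma (1 - \<alpha>)"
    proof -
      have "1 - \<alpha> \<notin> nonpos_Ints" using a1 nonpos_Ints_nonpos by fastforce
      thus ?thesis using Gamma_plus1[of "1 - \<alpha>"] by (simp add: algebra_simps)
    qed
    have "L2_formula \<alpha> \<tau> u j = \<tau> powr (1 - \<alpha>) / Gamma (2 - \<alpha>) * (\<Sum>k = 0..j. L2_c \<alpha> j (j - k) * v k)"
      unfolding L2_formula_def v_def ..
    also have "\<dots> = \<tau> powr (1 - \<alpha>) / Gamma (2 - \<alpha>) *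
        (\<Sum>k = 0..j. L2_a \<alpha> (j - k) * v k + L2_b \<alpha> (j - k) * (v (max k 1) - v (max k 1 - 1)))"
      unfolding L2_sum[OF j] ..
    also have "(\<Sum>k = 0..j. L2_a \<alpha> (j - k) * v k + L2_b \<alpha> (j - k) * (v (max k 1) - v (max k 1 - 1)))
        = (\<Sum>k = 0..j. L2_a \<alpha> (j - k) * v k + L2_b \<alpha> (j - k) * \<tau> * d k)"
      unfolding d_def using tau by simp
    also have "\<tau> powr (1 - \<alpha>) / Gamma (2 - \<alpha>) * \<dots> = (\<Sum>k = 0..j. J k) / Gamma (1 - \<alpha>)"
      unfolding J_def g2 sum_distrib_left[symmetric] by simp
    finally show ?thesis by (simp add: atLeast0AtMost lessThan_Suc_atMost)
  qed
  have "\<bar>caputo \<alpha> u t - L2_formula \<alpha> \<tau> u j\<bar> = \<bar>\<Sum>k<Suc j. I k - J k\<bar> / Gamma (1 - \<alpha>)"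
    unfolding cap L2 using G0 by (simp add: sum_subtractf diff_divide_distrib[symmetric])
  also have "\<dots> \<le> (\<Sum>k<Suc j. bd k) / Gamma (1 - \<alpha>)"
  proof (rule divide_right_mono[OF _ less_imp_le[OF G0]])
    have "\<bar>\<Sum>k<Suc j. I k - J k\<bar> \<le> (\<Sum>k<Suc j. \<bar>I k - J k\<bar>)" by (rule sum_abs)
    also have "\<dots> \<le> (\<Sum>k<Suc j. bd k)" using piece by (intro sum_mono) auto
    finally show "\<bar>\<Sum>k<Suc j. I k - J k\<bar> \<le> (\<Sum>k<Suc j. bd k)" .
  qed
  also have "(\<Sum>k<Suc j. bd k) \<le> K * (3 + 4 / (1 - \<alpha>)) * \<tau> powr (3 - \<alpha>)"
  proof -
    have "(\<Sum>k<Suc j. bd k) = (\<Sum>k<j. 3 * K * \<tau>^3 * (W (Suc k) - W k)) + 4 * K * \<tau>^2 * (\<tau> powr (1 - \<alpha>) / (1 - \<alpha>))"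
    proof -
      have "(\<Sum>k<j. bd k) = (\<Sum>k<j. 3 * K * \<tau>^3 * (W (Suc k) - W k))"
        by (rule sum.cong) (auto simp: bd_def W_def algebra_simps)
      thus ?thesis by (simp add: bd_def)
    qed
    also have "(\<Sum>k<j. 3 * K * \<tau>^3 * (W (Suc k) - W k)) = 3 * K * \<tau>^3 * (W j - W 0)"
      by (simp add: sum_distrib_left[symmetric] sum_lessThan_telescope)
    also have "W j = \<tau> powr (- \<alpha>)" unfolding W_def t_def by (simp add: algebra_simps)
    finally have eq: "(\<Sum>k<Suc j. bd k) = 3 * K * \<tau>^3 * (\<tau> powr (- \<alpha>) - W 0) + 4 * K * \<tau>^2 * (\<tau> powr (1 - \<alpha>) / (1 - \<alpha>))" .
    have W0: "0 \<le> W 0" unfolding W_def by simp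
    have p1: "\<tau>^3 * \<tau> powr (- \<alpha>) = \<tau> powr (3 - \<alpha>)"
    proof -
      have "\<tau>^3 = \<tau> powr 3" using powr_realpow[of \<tau> 3] tau by simp
      thus ?thesis using powr_add[of \<tau> 3 "- \<alpha>"] by simp
    qed
    have p2: "\<tau>^2 * \<tau> powr (1 - \<alpha>) = \<tau> powr (3 - \<alpha>)"
    proof -
      have "\<tau>^2 = \<tau> powr 2" using powr_realpow[of \<tau> 2] tau by simp
      thus ?thesis using powr_add[of \<tau> 2 "1 - \<alpha>"] by simp
    qed
    have "3 * K * \<tau>^3 * (\<tau> powr (- \<alpha>) - W 0) \<le> 3 * K * \<tau>^3 * \<tau> powr (- \<alpha>)"
      using W0 K0 tau by (simp add: mult_left_mono)
    also have "\<dots> = 3 * K * \<tau> powr (3 - \<alpha>)" using p1 by simp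
    finally have "(\<Sum>k<Suc j. bd k) \<le> 3 * K * \<tau> powr (3 - \<alpha>) + 4 * K * (\<tau>^2 * \<tau> powr (1 - \<alpha>)) / (1 - \<alpha>)"
      unfolding eq by simp
    also have "\<dots> = K * (3 + 4 / (1 - \<alpha>)) * \<tau> powr (3 - \<alpha>)"
      unfolding p2 using a1 by (simp add: field_simps)
    finally show ?thesis .
  qed
  hence "(\<Sum>k<Suc j. bd k) / Gamma (1 - \<alpha>) \<le> K * (3 + 4 / (1 - \<alpha>)) / Gamma (1 - \<alpha>) * \<tau> powr (3 - \<alpha>)"
    using G0 by (simp add: divide_right_mono)
  finally show ?thesis unfolding t_def .
qed

end


theorem lemma1:
  fixes \<alpha> K :: real
  assumes "0 < \<alpha>" and "\<alpha> < 1"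
  shows "\<exists>C. \<forall>(T::real) (M::nat) (u::real \<Rightarrow> real) u1 u2 u3 (j::nat).
     T > 0 \<longrightarrow> M \<ge> 2 \<longrightarrow>
     (\<forall>x\<in>{0..T}. (u has_real_derivative u1 x) (at x within {0..T}) \<and>
                  (u1 has_real_derivative u2 x) (at x within {0..T}) \<and>
                  (u2 has_real_derivative u3 x) (at x within {0..T})) \<longrightarrow>
     continuous_on {0..T} u3 \<longrightarrow>
     (\<forall>x\<in>{0..T}. \<bar>u3 x\<bar> \<le> K) \<longrightarrow>
     1 \<le> j \<longrightarrow> j \<le> M - 1 \<longrightarrow>
     \<bar>caputo \<alpha> u (real (j + 1) * (T / real M)) - L2_formula \<alpha> (T / real M) u j\<bar>
        \<le> C * (T / real M) powr (3 - \<alpha>)"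
proof (intro exI allI impI)
  fix T :: real and M :: nat and u u1 u2 u3 :: "real \<Rightarrow> real" and j :: nat
  assume T: "T > 0" and M: "M \<ge> 2"
    and der: "\<forall>x\<in>{0..T}. (u has_real_derivative u1 x) (at x within {0..T}) \<and>
                  (u1 has_real_derivative u2 x) (at x within {0..T}) \<and>
                  (u2 has_real_derivative u3 x) (at x within {0..T})"
    and bK: "\<forall>x\<in>{0..T}. \<bar>u3 x\<bar> \<le> K" and j1: "1 \<le> j" and jM: "j \<le> M - 1"
  have tau: "0 < T / real M" using T M by simp
  have jT: "real (j + 1) * (T / real M) \<le> T"
  proof -
    have "real (j + 1) \<le> real M" using jM M by simp
    hence "real (j + 1) * (T / real M) \<le> real M * (T / real M)"
      using tau by (intro mult_right_mono) auto
    also have "\<dots> = T" using M by simp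
    finally show ?thesis .
  qed
  show "\<bar>caputo \<alpha> u (real (j + 1) * (T / real M)) - L2_formula \<alpha> (T / real M) u j\<bar>
        \<le> K * (3 + 4 / (1 - \<alpha>)) / Gamma (1 - \<alpha>) * (T / real M) powr (3 - \<alpha>)"
    using main_est[of T u u1 u2 u3 K \<alpha> "T / real M" j] der bK assms tau j1 jT by blast
qed

end
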